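(* A (finite) maximal triangle-free graph on at least two vertices contains no induced cycle of length six if and only if it is a blow-up of some Andrásfai graph $\Gamma_k$, $k\ge1$.
   Context: A graph is maximal triangle-free if it contains no triangle but adding any new edge creates a triangle. A blow-up of $H$ is any graph obtained by replacing each vertex of $H$ by a non-empty independent set and each edge of $H$ by the complete bipartite graph between the corresponding sets, with no further edges. Andrásfai graph $\Gamma_k$: vertex set $\mathbb Z/(3k-1)\mathbb Z$, $ij$ an edge iff $i-j\in\{k,\dots,2k-1\}$ mod $3k-1$. *)

theory Defs
  imports Main
begin

definition simple_graph :: "'a set \<Rightarrow> ('a \<Rightarrow> 'a \<Rightarrow> bool) \<Rightarrow> bool" where
  "simple_graph V E \<longleftrightarrow> finite V \<and>
     (\<forall>x y. E x y \<longrightarrow> x \<in> V \<and> y \<in> V) \<and>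
     (\<forall>x y. E x y \<longrightarrow> E y x) \<and> (\<forall>x. \<not> E x x)"

definition triangle_free :: "'a set \<Rightarrow> ('a \<Rightarrow> 'a \<Rightarrow> bool) \<Rightarrow> bool" where
  "triangle_free V E \<longleftrightarrow>
     \<not> (\<exists>x\<in>V. \<exists>y\<in>V. \<exists>z\<in>V. E x y \<and> E y z \<and> E x z)"

definition maximal_triangle_free :: "'a set \<Rightarrow> ('a \<Rightarrow> 'a \<Rightarrow> bool) \<Rightarrow> bool" where
  "maximal_triangle_free V E \<longleftrightarrow> triangle_free V E \<and>
     (\<forall>x\<in>V. \<forall>y\<in>V. x \<noteq> y \<and> \<not> E x y \<longrightarrow> (\<exists>z\<in>V. E x z \<and> E y z))"

definition has_induced_C6 :: "'a set \<Rightarrow> ('a \<Rightarrow> 'a \<Rightarrow> bool) \<Rightarrow> bool" where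
  "has_induced_C6 V E \<longleftrightarrow> (\<exists>c :: nat \<Rightarrow> 'a.
     inj_on c {0..<6} \<and> c ` {0..<6} \<subseteq> V \<and>
     (\<forall>i<6. \<forall>j<6. E (c i) (c j) \<longleftrightarrow> (j = (i + 1) mod 6 \<or> i = (j + 1) mod 6)))"

definition andrasfai_vertices :: "nat \<Rightarrow> nat set" where
  "andrasfai_vertices k = {0..<3*k - 1}"

definition andrasfai_edge :: "nat \<Rightarrow> nat \<Rightarrow> nat \<Rightarrow> bool" where
  "andrasfai_edge k i j \<longleftrightarrow> i \<in> andrasfai_vertices k \<and> j \<in> andrasfai_vertices k \<and>
     (let d = (int i - int j) mod int (3*k - 1) in int k \<le> d \<and> d \<le> int (2*k - 1))"

text \<open>G = (V,E) is a blow-up of H = (W,F): there is a map f from V onto W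
  (its fibres are the non-empty parts) such that x,y are adjacent in G iff
  f x, f y are adjacent in H. Since F is irreflexive, each fibre is independent.\<close>
definition is_blowup_of :: "'a set \<Rightarrow> ('a \<Rightarrow> 'a \<Rightarrow> bool) \<Rightarrow> 'b set \<Rightarrow> ('b \<Rightarrow> 'b \<Rightarrow> bool) \<Rightarrow> bool" where
  "is_blowup_of V E W F \<longleftrightarrow> (\<exists>f. f ` V = W \<and>
     (\<forall>x\<in>V. \<forall>y\<in>V. E x y \<longleftrightarrow> F (f x) (f y)))"

end

theory Submission
  imports Defs
begin


definition sc :: "nat \<Rightarrow> nat" where "sc r = (if r = 2 then 0 else r + 1)"
lemma sc_mod: "(a + 1) mod 3 = sc (a mod 3)" unfolding sc_def by (simp add: mod_Suc)
lemma less3: "r < (3::nat) \<Longrightarrow> r = 0 \<or> r = 1 \<or> r = 2" by auto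
lemma sc_lt: "r < 3 \<Longrightarrow> sc r < 3" unfolding sc_def by auto
lemma sc3: "r < 3 \<Longrightarrow> sc (sc (sc r)) = r" unfolding sc_def by auto
lemma sc_inj: "r < 3 \<Longrightarrow> s < 3 \<Longrightarrow> sc r = sc s \<longleftrightarrow> r = s" unfolding sc_def by auto
lemma sc_neq: "sc r \<noteq> r" unfolding sc_def by auto

lemma res6:
  fixes r0 r1 r2 r3 r4 :: nat
  assumes "r0 < 3" "r1 < 3" "r2 < 3" "r3 < 3" "r4 < 3" "r0 = sc r1" "r0 \<noteq> sc r2" "r0 \<noteq> sc r3" "r0 \<noteq> sc r4"
    "r2 \<noteq> r3" "r3 \<noteq> r4"
  shows "(r3 = r0 \<and> r2 = sc r0 \<and> r4 = sc r0) \<or> (r3 = sc r0 \<and> r2 = r0 \<and> r4 = r0)"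
  using less3[OF assms(1)] less3[OF assms(2)] less3[OF assms(3)] less3[OF assms(4)] less3[OF assms(5)] assms(6-)
  unfolding sc_def by auto

definition ladj :: "nat \<Rightarrow> nat \<Rightarrow> bool" where
  "ladj p q \<longleftrightarrow> (p < q \<and> q mod 3 = (p + 1) mod 3) \<or> (q < p \<and> p mod 3 = (q + 1) mod 3)"

lemma ladj_sc: "ladj p q \<longleftrightarrow> (p < q \<and> q mod 3 = sc (p mod 3)) \<or> (q < p \<and> p mod 3 = sc (q mod 3))"
  unfolding ladj_def sc_mod ..

lemma ladj_sym: "ladj p q \<longleftrightarrow> ladj q p" unfolding ladj_def by auto

lemma L1: "q mod 3 = sc (p mod 3) \<Longrightarrow> ladj p q \<longleftrightarrow> p < q"
  unfolding ladj_sc using sc3[of "p mod 3"] sc_neq by (metis less_asym mod_less_divisor zero_less_numeral)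
lemma L2: "p mod 3 = sc (q mod 3) \<Longrightarrow> ladj p q \<longleftrightarrow> q < p"
  using L1 ladj_sym by metis
lemma L0: "p mod 3 = q mod 3 \<Longrightarrow> \<not> ladj p q"
  unfolding ladj_sc using sc_neq by metis

lemma noC6_max:
  fixes a0 a1 a2 a3 a4 a5 :: nat
  assumes "a1 \<le> a0" "a2 \<le> a0" "a3 \<le> a0" "a4 \<le> a0" "a5 \<le> a0"
   "ladj a0 a1" "ladj a1 a2" "ladj a2 a3" "ladj a3 a4" "ladj a4 a5" "ladj a5 a0"
     "\<not> ladj a0 a2" "\<not> ladj a0 a3" "\<not> ladj a0 a4"
     "\<not> ladj a1 a3" "\<not> ladj a1 a4" "\<not> ladj a1 a5"
     "\<not> ladj a2 a4" "\<not> ladj a2 a5" "\<not> ladj a3 a5"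
  shows False
proof -
  have B: "a mod 3 < 3" for a :: nat by simp
  have r1: "a0 mod 3 = sc (a1 mod 3)" using assms(1,6) unfolding ladj_sc by auto
  have r5: "a0 mod 3 = sc (a5 mod 3)" using assms(5,11) unfolding ladj_sc by auto
  have "a2 \<noteq> a0" using assms(8,13) by auto
  then have r2: "a0 mod 3 \<noteq> sc (a2 mod 3)" using assms(2,12) unfolding ladj_sc by auto
  have "a3 \<noteq> a0" using assms(8,12) ladj_sym by metis
  then have r3: "a0 mod 3 \<noteq> sc (a3 mod 3)" using assms(3,13) unfolding ladj_sc by auto
  have "a4 \<noteq> a0" using assms(9,13) ladj_sym by metis
  then have r4: "a0 mod 3 \<noteq> sc (a4 mod 3)" using assms(4,14) unfolding ladj_sc by auto
  have d23: "a2 mod 3 \<noteq> a3 mod 3" using L0 assms(8) by blast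
  have d34: "a3 mod 3 \<noteq> a4 mod 3" using L0 assms(9) by blast
  have r15: "a1 mod 3 = a5 mod 3" using r1 r5 sc_inj B by metis
  from res6[OF B B B B B r1 r2 r3 r4 d23 d34] show False
  proof
    assume h: "a3 mod 3 = a0 mod 3 \<and> a2 mod 3 = sc (a0 mod 3) \<and> a4 mod 3 = sc (a0 mod 3)"
    have e1: "a1 mod 3 = sc (a2 mod 3)" "a5 mod 3 = sc (a4 mod 3)" "a5 mod 3 = sc (a2 mod 3)" "a1 mod 3 = sc (a4 mod 3)"
      using h r1 r15 sc3[OF B[of a1]] by auto
    have "a2 < a1" using L2[OF e1(1)] assms(7) by simp
    moreover have "a4 < a5" using L2[OF e1(2)] assms(10) ladj_sym by metis
    moreover have "\<not> a2 < a5" using L2[OF e1(3)] assms(19) ladj_sym by metis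
    moreover have "\<not> a4 < a1" using L2[OF e1(4)] assms(16) by simp
    ultimately show False by linarith
  next
    assume h: "a3 mod 3 = sc (a0 mod 3) \<and> a2 mod 3 = a0 mod 3 \<and> a4 mod 3 = a0 mod 3"
    have e1: "a2 mod 3 = sc (a1 mod 3)" "a4 mod 3 = sc (a5 mod 3)" "a2 mod 3 = sc (a5 mod 3)" "a4 mod 3 = sc (a1 mod 3)"
      using h r1 r5 r15 by auto
    have "a1 < a2" using L1[OF e1(1)] assms(7) by simp
    moreover have "a5 < a4" using L1[OF e1(2)] assms(10) ladj_sym by metis
    moreover have "\<not> a5 < a2" using L1[OF e1(3)] assms(19) ladj_sym by metis
    moreover have "\<not> a1 < a4" using L1[OF e1(4)] assms(16) by simp
    ultimately show False by linarith
  qed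
qed


lemma all6: "(\<forall>i<6::nat. P i) \<longleftrightarrow> P 0 \<and> P 1 \<and> P 2 \<and> P 3 \<and> P 4 \<and> P 5"
proof -
  have "{..<6::nat} = {0,1,2,3,4,5}" by auto
  then show ?thesis by (auto simp: lessThan_iff[symmetric] simp del: lessThan_iff)
qed

locale mtfg =
  fixes V :: "'a set" and E :: "'a \<Rightarrow> 'a \<Rightarrow> bool"
  assumes sg: "simple_graph V E" and mtf: "maximal_triangle_free V E" and noc6: "\<not> has_induced_C6 V E"
begin

definition nb :: "'a \<Rightarrow> 'a set" where "nb x = {y. E x y}"

lemma fin: "finite V" using sg unfolding simple_graph_def by auto
lemma inV: "E x y \<Longrightarrow> x \<in> V" "E x y \<Longrightarrow> y \<in> V" using sg unfolding simple_graph_def by auto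
lemma sym: "E x y \<Longrightarrow> E y x" using sg unfolding simple_graph_def by auto
lemma irr: "\<not> E x x" using sg unfolding simple_graph_def by auto
lemma tf: "E x y \<Longrightarrow> E y z \<Longrightarrow> E x z \<Longrightarrow> False"
  using mtf inV unfolding maximal_triangle_free_def triangle_free_def by metis
lemma cn: "x \<in> V \<Longrightarrow> y \<in> V \<Longrightarrow> x \<noteq> y \<Longrightarrow> \<not> E x y \<Longrightarrow> \<exists>z. E x z \<and> E y z"
  using mtf unfolding maximal_triangle_free_def by blast

lemma helly:
  assumes "E X b1" "E Y b1" "\<not> E Z b1" "E Y b2" "E Z b2" "\<not> E X b2" "E X b3" "E Z b3" "\<not> E Y b3"
  shows False
proof -
  note S = sym
  have n1: "\<not> E X Y" using tf[of X Y b1] assms(1,2) S by blast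
  have n2: "\<not> E Y Z" using tf[of Y Z b2] assms(4,5) S by blast
  have n3: "\<not> E X Z" using tf[of X Z b3] assms(7,8) S by blast
  have n4: "\<not> E b1 b2" using tf[of b1 b2 Y] assms(2,4) S by blast
  have n5: "\<not> E b2 b3" using tf[of b2 b3 Z] assms(5,8) S by blast
  have n6: "\<not> E b1 b3" using tf[of b1 b3 X] assms(1,7) S by blast
  have d: "X \<noteq> Y" "X \<noteq> Z" "Y \<noteq> Z" "b1 \<noteq> b2" "b1 \<noteq> b3" "b2 \<noteq> b3"
    "X \<noteq> b1" "X \<noteq> b3" "Y \<noteq> b1" "Y \<noteq> b2"  "Z \<noteq> b2" "Z \<noteq> b3"
    using assms irr by metis+
  have d2: "X \<noteq> b2" using assms(1,2,4) tf[of Y X b1] by blast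
  have d3: "Y \<noteq> b3" using assms(1,2,7) tf[of X Y b1] by blast
  have d4: "Z \<noteq> b1" using assms(2,4,5) tf[of Y Z b2] by blast
  define c where "c = (\<lambda>i::nat. if i = 0 then X else if i = 1 then b1 else if i = 2 then Y
      else if i = 3 then b2 else if i = 4 then Z else b3)"
  have "has_induced_C6 V E"
    unfolding has_induced_C6_def
  proof (intro exI conjI)
    have "{0..<6::nat} = {0,1,2,3,4,5}" by auto
    then show "inj_on c {0..<6}" using d d2 d3 d4 unfolding c_def inj_on_def by auto
    have "{0..<6::nat} = {0,1,2,3,4,5}" by auto
    then show "c ` {0..<6} \<subseteq> V" unfolding c_def using assms inV by auto
    show "\<forall>i<6. \<forall>j<6. E (c i) (c j) = (j = (i + 1) mod 6 \<or> i = (j + 1) mod 6)"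
    proof -
      have e: "E X b1" "E b1 X" "E b1 Y" "E Y b1" "E Y b2" "E b2 Y" "E b2 Z" "E Z b2" "E Z b3" "E b3 Z" "E b3 X" "E X b3"
        using assms S by auto
      have ne: "\<not> E X Y" "\<not> E Y X" "\<not> E Y Z" "\<not> E Z Y" "\<not> E X Z" "\<not> E Z X"
        "\<not> E b1 b2" "\<not> E b2 b1" "\<not> E b2 b3" "\<not> E b3 b2" "\<not> E b1 b3" "\<not> E b3 b1"
        "\<not> E X b2" "\<not> E b2 X" "\<not> E Y b3" "\<not> E b3 Y" "\<not> E Z b1" "\<not> E b1 Z"
        using assms(3,6,9) n1 n2 n3 n4 n5 n6 S by blast+
      show ?thesis unfolding all6 c_def using e ne irr by simp
    qed
  qed
  then show False using noc6 by blast
qed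

end


definition nx :: "nat \<Rightarrow> nat" where "nx c = (c + 1) mod 3"
definition pv :: "nat \<Rightarrow> nat" where "pv c = (c + 2) mod 3"

lemma cfacts:
  assumes "c < 3"
  shows "nx c < 3" "pv c < 3" "nx c \<noteq> c" "pv c \<noteq> c" "nx c \<noteq> pv c"
    "pv (nx c) = c" "nx (pv c) = c" "pv (pv c) = nx c" "nx (nx c) = pv c"
  using less3[OF assms] unfolding nx_def pv_def by (elim disjE; simp)+

lemma cthree: "b < 3 \<Longrightarrow> c < 3 \<Longrightarrow> b = c \<or> b = nx c \<or> b = pv c"
  using less3[of b] less3[of c] unfolding nx_def pv_def by auto

lemma third: "a < 3 \<Longrightarrow> b < 3 \<Longrightarrow> c < 3 \<Longrightarrow> d < (3::nat) \<Longrightarrow> a \<noteq> b \<Longrightarrow> c \<noteq> a \<Longrightarrow> c \<noteq> b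
   \<Longrightarrow> d \<noteq> a \<Longrightarrow> d \<noteq> b \<Longrightarrow> c = d"
  using less3[of a] less3[of b] less3[of c] less3[of d] by auto

locale col3 = mtfg +
  fixes col :: "'a \<Rightarrow> nat"
  assumes col_lt: "col x < 3"
    and proper: "E x y \<Longrightarrow> col x \<noteq> col y"
    and colN: "x \<in> V \<Longrightarrow> y \<in> V \<Longrightarrow> nb x = nb y \<Longrightarrow> col x = col y"
begin

definition Nd :: "'a \<Rightarrow> nat \<Rightarrow> 'a set" where "Nd x d = {y. E x y \<and> col y = d}"

lemma chain:
  assumes "x \<in> V" "x' \<in> V" "col x = col x'" "d < 3" "d \<noteq> col x"
  shows "Nd x d \<subseteq> Nd x' d \<or> Nd x' d \<subseteq> Nd x d"
proof (rule ccontr)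
  assume "\<not> ?thesis"
  then obtain w w' where w: "E x w" "col w = d" "\<not> E x' w" and w': "E x' w'" "col w' = d" "\<not> E x w'"
    unfolding Nd_def by auto
  have "w \<noteq> x'" using w assms(3,5) by auto
  moreover have "\<not> E w x'" using w(3) sym by blast
  ultimately obtain t where t: "E w t" "E x' t" using cn[OF inV(2)[OF w(1)] assms(2)] by blast
  have "w' \<noteq> x" using w' assms(3,5) by auto
  moreover have "\<not> E w' x" using w'(3) sym by blast
  ultimately obtain ta where ta: "E w' ta" "E x ta" using cn[OF inV(2)[OF w'(1)] assms(1)] by blast
  have "col t = col ta"
    using third[OF col_lt[of w] col_lt[of x] col_lt[of t] col_lt[of ta]] proper[OF t(1)] proper[OF t(2)]
      proper[OF ta(1)] proper[OF ta(2)] w(2) w'(2) assms(3,5) by auto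
  then have "\<not> E t ta" using proper by blast
  moreover have "\<not> E x x'" using proper assms(3) by blast
  moreover have "\<not> E w' w" using proper w(2) w'(2) by auto
  ultimately show False
    using helly[of x ta w' t x' w] ta w' t w sym by blast
qed

lemma anti:
  assumes "x \<in> V" "x' \<in> V" "col x = col x'" "d < 3" "d' < 3" "d \<noteq> col x" "d' \<noteq> col x" "d \<noteq> d'"
    "Nd x d \<subseteq> Nd x' d"
  shows "Nd x' d' \<subseteq> Nd x d'"
proof
  fix y assume "y \<in> Nd x' d'"
  then have y: "E x' y" "col y = d'" unfolding Nd_def by auto
  show "y \<in> Nd x d'"
  proof (rule ccontr)
    assume "y \<notin> Nd x d'"
    then have n: "\<not> E x y" using y(2) unfolding Nd_def by auto
    have "x \<noteq> y" using y assms by auto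
    then obtain t where t: "E x t" "E y t" using cn[OF assms(1) inV(2)[OF y(1)]] n by blast
    have "col t = d"
      using third[OF col_lt[of x] col_lt[of y] col_lt[of t] assms(4)] proper[OF t(1)] proper[OF t(2)]
        y(2) assms(6,7,8) by auto
    then have "t \<in> Nd x' d" using assms(9) t(1) unfolding Nd_def by auto
    then have "E x' t" unfolding Nd_def by auto
    then show False using tf[OF y(1) t(2)] by blast
  qed
qed

lemma nb_split:
  assumes "d < 3" "d' < 3" "d \<noteq> col x" "d' \<noteq> col x" "d \<noteq> d'"
  shows "nb x = Nd x d \<union> Nd x d'"
proof -
  have "E x y \<Longrightarrow> col y = d \<or> col y = d'" for y
    using third[OF col_lt[of x] assms(1) col_lt[of y] assms(2)] proper[of x y] assms by auto
  then show ?thesis unfolding nb_def Nd_def by auto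
qed

lemma lemT:
  assumes "x \<in> V" "y \<in> V" "z \<in> V" "col x \<noteq> col y" "col y \<noteq> col z" "col x \<noteq> col z"
    "\<not> E x y" "\<not> E y z" "\<not> E x z"
  shows False
proof -
  obtain p where p: "E x p" "E y p" using cn[OF assms(1,2)] assms by auto
  obtain q where q: "E y q" "E z q" using cn[OF assms(2,3)] assms by auto
  obtain r where r: "E x r" "E z r" using cn[OF assms(1,3)] assms by auto
  have "col p = col z" using third[OF col_lt[of x] col_lt[of y] col_lt[of p] col_lt[of z]]
    proper[OF p(1)] proper[OF p(2)] assms(4-6) by auto
  then have 1: "\<not> E z p" using proper by metis
  have "col q = col x" using third[OF col_lt[of y] col_lt[of z] col_lt[of q] col_lt[of x]]
    proper[OF q(1)] proper[OF q(2)] assms(4-6) by auto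
  then have 2: "\<not> E x q" using proper by metis
  have "col r = col y" using third[OF col_lt[of x] col_lt[of z] col_lt[of r] col_lt[of y]]
    proper[OF r(1)] proper[OF r(2)] assms(4-6) by auto
  then have 3: "\<not> E y r" using proper by metis
  show False using helly[of x p y z q r] p q r 1 2 3 by blast
qed

lemma common:
  assumes "x \<in> V" "y \<in> V" "col x \<noteq> col y" "\<not> E x y"
  shows "\<exists>w. E x w \<and> E y w \<and> col w \<noteq> col x \<and> col w \<noteq> col y"
proof -
  have "x \<noteq> y" using assms by auto
  then obtain w where "E x w" "E y w" using cn[OF assms(1,2)] assms by auto
  then show ?thesis using proper sym by metis
qed

end

context col3 begin

definition dn :: "'a \<Rightarrow> 'a set" where "dn x = Nd x (pv (col x))"
definition up :: "'a \<Rightarrow> 'a set" where "up x = Nd x (nx (col x))"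

lemmas cf = cfacts[OF col_lt]

lemma up_iff: "y \<in> up x \<longleftrightarrow> E x y \<and> col y = nx (col x)" unfolding up_def Nd_def by auto
lemma dn_iff: "y \<in> dn x \<longleftrightarrow> E x y \<and> col y = pv (col x)" unfolding dn_def Nd_def by auto

lemma chain_dn: "x \<in> V \<Longrightarrow> x' \<in> V \<Longrightarrow> col x = col x' \<Longrightarrow> dn x \<subseteq> dn x' \<or> dn x' \<subseteq> dn x"
  unfolding dn_def using chain[of x x' "pv (col x)"] cf by metis
lemma chain_up: "x \<in> V \<Longrightarrow> x' \<in> V \<Longrightarrow> col x = col x' \<Longrightarrow> up x \<subseteq> up x' \<or> up x' \<subseteq> up x"
  unfolding up_def using chain[of x x' "nx (col x)"] cf by metis
lemma anti1: "x \<in> V \<Longrightarrow> x' \<in> V \<Longrightarrow> col x = col x' \<Longrightarrow> dn x \<subseteq> dn x' \<Longrightarrow> up x' \<subseteq> up x"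
  unfolding dn_def up_def using anti[of x x' "pv (col x)" "nx (col x)"] cf by metis
lemma anti2: "x \<in> V \<Longrightarrow> x' \<in> V \<Longrightarrow> col x = col x' \<Longrightarrow> up x \<subseteq> up x' \<Longrightarrow> dn x' \<subseteq> dn x"
  unfolding dn_def up_def using anti[of x x' "nx (col x)" "pv (col x)"] cf by metis
lemma nb_du: "nb x = dn x \<union> up x"
  unfolding dn_def up_def using nb_split[of "pv (col x)" "nx (col x)" x] cf by metis
lemma dn_eq: "x \<in> V \<Longrightarrow> x' \<in> V \<Longrightarrow> col x = col x' \<Longrightarrow> dn x = dn x' \<Longrightarrow> nb x = nb x'"
  using anti1[of x x'] anti1[of x' x] nb_du[of x] nb_du[of x'] by auto
lemma dn_nb: "x \<in> V \<Longrightarrow> x' \<in> V \<Longrightarrow> nb x = nb x' \<Longrightarrow> dn x = dn x'"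
  using colN[of x x'] unfolding dn_def Nd_def nb_def by auto

lemma up_nb: "x \<in> V \<Longrightarrow> x' \<in> V \<Longrightarrow> nb x = nb x' \<Longrightarrow> up x = up x'"
  using colN[of x x'] unfolding up_def Nd_def nb_def by auto

definition lt :: "'a \<Rightarrow> 'a \<Rightarrow> bool" where
  "lt x y = (if col x = col y then dn x \<subset> dn y else if col y = nx (col x) then E x y else \<not> E x y)"

lemma lt_same: "col x = col y \<Longrightarrow> lt x y \<longleftrightarrow> dn x \<subset> dn y" unfolding lt_def by auto
lemma lt_nx: assumes "col y = nx (col x)" shows "lt x y \<longleftrightarrow> E x y"
proof -
  have "col x \<noteq> col y" using assms cf(3)[of x] by metis
  then show ?thesis unfolding lt_def using assms by simp
qed
lemma lt_pv: assumes "col y = pv (col x)" shows "lt x y \<longleftrightarrow> \<not> E x y"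
proof -
  have "col x \<noteq> col y" using assms cf(4)[of x] by metis
  moreover have "col y \<noteq> nx (col x)" using assms cf(5)[of x] by metis
  ultimately show ?thesis unfolding lt_def using assms by simp
qed

lemma ccases: "(col y = col x \<Longrightarrow> P) \<Longrightarrow> (col y = nx (col x) \<Longrightarrow> P) \<Longrightarrow> (col y = pv (col x) \<Longrightarrow> P) \<Longrightarrow> P"
  using cthree[OF col_lt col_lt] by metis

lemma lt_irr: "\<not> lt x x" unfolding lt_def by auto

lemma lt_trans:
  assumes V: "x \<in> V" "y \<in> V" "z \<in> V" and xy: "lt x y" and yz: "lt y z"
  shows "lt x z"
proof (rule ccases[of y x])
  assume b: "col y = col x"
  show ?thesis
  proof (rule ccases[of z y])
    assume c: "col z = col y"
    have "dn x \<subset> dn y" "dn y \<subset> dn z" using lt_same[of x y] lt_same[of y z] xy yz b c by simp_all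
    then have "dn x \<subset> dn z" by blast
    then show ?thesis using lt_same[of x z] b c by simp
  next
    assume c: "col z = nx (col y)"
    have "dn x \<subseteq> dn y" using xy b lt_same[of x y] by simp
    then have u: "up y \<subseteq> up x" by (rule anti1[OF V(1) V(2) b[symmetric]])
    have "E y z" using yz c lt_nx[of z y] by simp
    then have "z \<in> up y" using c up_iff by simp
    then have "z \<in> up x" using u by blast
    then have "E x z" using up_iff by simp
    then show ?thesis using lt_nx[of z x] c b by simp
  next
    assume c: "col z = pv (col y)"
    have "dn x \<subseteq> dn y" using xy b lt_same[of x y] by simp
    moreover have "\<not> E y z" using yz c lt_pv[of z y] by simp
    then have "z \<notin> dn y" using dn_iff by simp
    ultimately have "z \<notin> dn x" by blast
    then have "\<not> E x z" using dn_iff c b by simp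
    then show ?thesis using lt_pv[of z x] c b by simp
  qed
next
  assume b: "col y = nx (col x)"
  have e1: "E x y" using xy b lt_nx[of y x] by simp
  show ?thesis
  proof (rule ccases[of z y])
    assume c: "col z = col y"
    have "col x = pv (col y)" using b cf(6)[of x] by simp
    then have "x \<in> dn y" using e1 sym dn_iff by simp
    moreover have "dn y \<subseteq> dn z" using yz c lt_same[of y z] by simp
    ultimately have "x \<in> dn z" by blast
    then have "E z x" using dn_iff by simp
    then have "E x z" using sym by blast
    then show ?thesis using lt_nx[of z x] c b by simp
  next
    assume c: "col z = nx (col y)"
    have "E y z" using yz c lt_nx[of z y] by simp
    then have "\<not> E x z" using e1 tf by blast
    moreover have "col z = pv (col x)" using b c cf(9)[of x] by simp
    ultimately show ?thesis using lt_pv[of z x] by simp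
  next
    assume c: "col z = pv (col y)"
    have n: "\<not> E y z" using yz c lt_pv[of z y] by simp
    have cz: "col z = col x" using b c cf(6)[of x] by simp
    have yx: "y \<in> up x" using e1 b up_iff by simp
    have yz': "y \<notin> up z"
    proof
      assume "y \<in> up z"
      then have "E z y" using up_iff by simp
      then show False using n sym by blast
    qed
    have "up x \<subseteq> up z \<or> up z \<subseteq> up x" by (rule chain_up[OF V(1) V(3) cz[symmetric]])
    then have "up z \<subseteq> up x" using yx yz' by blast
    then have dxz: "dn x \<subseteq> dn z" by (rule anti2[OF V(3) V(1) cz])
    have "dn x \<noteq> dn z"
    proof
      assume "dn x = dn z"
      then have "nb x = nb z" by (rule dn_eq[OF V(1) V(3) cz[symmetric]])
      then have "up x = up z" by (rule up_nb[OF V(1) V(3)])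
      then show False using yx yz' by blast
    qed
    then have "dn x \<subset> dn z" using dxz by blast
    then show ?thesis using lt_same[of x z] cz by simp
  qed
next
  assume b: "col y = pv (col x)"
  have n1: "\<not> E x y" using xy b lt_pv[of y x] by simp
  show ?thesis
  proof (rule ccases[of z y])
    assume c: "col z = col y"
    have "dn y \<subseteq> dn z" using yz c lt_same[of y z] by simp
    then have uzy: "up z \<subseteq> up y" by (rule anti1[OF V(2) V(3) c[symmetric]])
    have cx: "col x = nx (col y)" using b cf(7)[of x] by simp
    have "\<not> E z x"
    proof
      assume "E z x"
      then have "x \<in> up z" using up_iff c cx by simp
      then have "x \<in> up y" using uzy by blast
      then have "E y x" using up_iff by simp
      then show False using n1 sym by blast
    qed
    then have "\<not> E x z" using sym by blast
    then show ?thesis using lt_pv[of z x] c b by simp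
  next
    assume c: "col z = nx (col y)"
    have e2: "E y z" using yz c lt_nx[of z y] by simp
    have cz: "col z = col x" using b c cf(7)[of x] by simp
    have yd: "y \<in> dn z" using e2 sym cz b dn_iff by simp
    have yd': "y \<notin> dn x" using n1 dn_iff by simp
    have "dn x \<subseteq> dn z \<or> dn z \<subseteq> dn x" by (rule chain_dn[OF V(1) V(3) cz[symmetric]])
    then have "dn x \<subseteq> dn z" using yd yd' by blast
    then have "dn x \<subset> dn z" using yd yd' by blast
    then show ?thesis using lt_same[of x z] cz by simp
  next
    assume c: "col z = pv (col y)"
    have n2: "\<not> E y z" using yz c lt_pv[of z y] by simp
    have cz: "col z = nx (col x)" using b c cf(8)[of x] by simp
    have "E x z"
    proof (rule ccontr)
      assume n3: "\<not> E x z"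
      have "col x \<noteq> col y" using b cf(4)[of x] by metis
      moreover have "col y \<noteq> col z" using c cf(4)[of y] by metis
      moreover have "col x \<noteq> col z" using cz cf(3)[of x] by metis
      ultimately show False using lemT[of x y z] V n1 n2 n3 by blast
    qed
    then show ?thesis using lt_nx[of z x] cz by simp
  qed
qed

lemma lt_total:
  assumes "x \<in> V" "y \<in> V"
  shows "lt x y \<or> lt y x \<or> nb x = nb y"
proof (rule ccases[of y x])
  assume b: "col y = col x"
  then show ?thesis using chain_dn[of x y] dn_eq[of x y] assms lt_same by auto
next
  assume b: "col y = nx (col x)"
  then have "col x = pv (col y)" using cf(6)[of x] by simp
  then show ?thesis using b lt_nx lt_pv sym by metis
next
  assume b: "col y = pv (col x)"
  then have "col x = nx (col y)" using cf(7)[of x] by simp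
  then show ?thesis using b lt_nx lt_pv sym by metis
qed

lemma lt_resp1:
  assumes "x \<in> V" "x' \<in> V" "nb x = nb x'"
  shows "lt x y \<longleftrightarrow> lt x' y"
proof -
  have c: "col x = col x'" by (rule colN[OF assms])
  have d: "dn x = dn x'" by (rule dn_nb[OF assms])
  have "y \<in> nb x \<longleftrightarrow> y \<in> nb x'" using assms(3) by simp
  then have e: "E x y \<longleftrightarrow> E x' y" unfolding nb_def by simp
  show ?thesis unfolding lt_def by (simp only: c d e)
qed

lemma lt_resp2:
  assumes "x \<in> V" "x' \<in> V" "nb x = nb x'"
  shows "lt y x \<longleftrightarrow> lt y x'"
proof -
  have c: "col x = col x'" by (rule colN[OF assms])
  have d: "dn x = dn x'" by (rule dn_nb[OF assms])
  have "y \<in> nb x \<longleftrightarrow> y \<in> nb x'" using assms(3) by simp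
  then have e: "E y x \<longleftrightarrow> E y x'" unfolding nb_def using sym by blast
  show ?thesis unfolding lt_def by (simp only: c d e)
qed

lemma K3:
  assumes "x \<in> V" "y \<in> V" "lt x y" "col y \<noteq> nx (col x)"
  shows "\<exists>w\<in>V. col w = nx (col x) \<and> lt x w \<and> lt w y"
proof (rule ccases[of y x])
  assume b: "col y = col x"
  have s: "dn x \<subset> dn y" using assms(3) b lt_same by auto
  have "up y \<subseteq> up x" using anti1[of x y] s assms b by auto
  moreover have "\<not> up x \<subseteq> up y" using anti2[of x y] s assms b by auto
  ultimately obtain w where w: "w \<in> up x" "w \<notin> up y" by auto
  have cw: "col w = nx (col x)" and e: "E x w" using w up_iff by auto
  have "\<not> E y w" using w(2) cw b up_iff by auto
  moreover have "col y = pv (col w)" using cw b cf(6)[of x] by simp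
  ultimately have "lt w y" using lt_pv sym by metis
  moreover have "lt x w" using e cw lt_nx by auto
  moreover have "w \<in> V" using e inV by auto
  ultimately show ?thesis using cw by auto
next
  assume b: "col y = nx (col x)"
  then show ?thesis using assms(4) by auto
next
  assume b: "col y = pv (col x)"
  have n: "\<not> E x y" using assms(3) b lt_pv by auto
  have "col x \<noteq> col y" using b cf(4)[of x] by metis
  then obtain w where w: "E x w" "E y w" "col w \<noteq> col x" "col w \<noteq> col y" using common[OF assms(1,2)] n by auto
  have cw: "col w = nx (col x)" using cthree[OF col_lt col_lt, of w x] w(3,4) b by auto
  have "lt x w" using w(1) cw lt_nx by auto
  moreover have "col y = nx (col w)" using cw b cf(9)[of x] by simp
  then have "lt w y" using w(2) sym lt_nx by metis
  moreover have "w \<in> V" using w inV by auto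
  ultimately show ?thesis using cw by auto
qed

end



definition cay :: "nat \<Rightarrow> nat \<Rightarrow> nat" where
  "cay k p = (if p mod 3 = 0 then p div 3 else if p mod 3 = 1 then k + p div 3 else 2 * k + p div 3)"
definition lin :: "nat \<Rightarrow> nat \<Rightarrow> nat" where
  "lin k i = (if i < k then 3 * i else if i < 2 * k then 3 * (i - k) + 1 else 3 * (i - 2 * k) + 2)"

lemma dm3: "(3 * j) mod 3 = (0::nat)" "(3 * j) div 3 = (j::nat)" "(3 * j + 1) mod 3 = (1::nat)" "(3 * j + 1) div 3 = (j::nat)"
  "(3 * j + 2) mod 3 = (2::nat)" "(3 * j + 2) div 3 = (j::nat)" by presburger+

lemma cay_lin: assumes "i < 3 * k - 1" shows "cay k (lin k i) = i"
proof (cases "i < k")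
  case True
  then have "lin k i = 3 * i" by (simp add: lin_def)
  then show ?thesis unfolding cay_def by (simp only: dm3) simp
next
  case F: False
  show ?thesis
  proof (cases "i < 2 * k")
    case True
    then have "lin k i = 3 * (i - k) + 1" using F by (simp add: lin_def)
    then have "cay k (lin k i) = k + (i - k)" unfolding cay_def by (simp only: dm3) simp
    then show ?thesis using F by simp
  next
    case False
    then have "lin k i = 3 * (i - 2 * k) + 2" using F by (simp add: lin_def)
    then have "cay k (lin k i) = 2 * k + (i - 2 * k)" unfolding cay_def by (simp only: dm3) simp
    then show ?thesis using False by simp
  qed
qed

lemma lin_bound: "i < 3 * k - 1 \<Longrightarrow> lin k i < 3 * k - 1"
  unfolding lin_def by auto

lemma cay_bound: assumes "p < 3 * k - 1" shows "cay k p < 3 * k - 1"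
proof -
  obtain a r where p: "p = 3 * a + r" "r < 3" by (metis div_mod_decomp mod_less_divisor zero_less_numeral mult.commute)
  then have "p div 3 = a" "p mod 3 = r" by auto
  then show ?thesis unfolding cay_def using assms p by auto
qed

lemma mod_small: "- (m::int) < d \<Longrightarrow> d < m \<Longrightarrow> d mod m = (if d < 0 then d + m else d)"
proof -
  assume a: "- m < d" "d < m"
  show ?thesis
  proof (cases "d < 0")
    case True
    then have "(d + m) mod m = d + m" using a by (intro mod_pos_pos_trivial) auto
    then show ?thesis using True by simp
  next
    case False
    then show ?thesis using a by (simp add: mod_pos_pos_trivial)
  qed
qed

lemma edge_cay:
  assumes k: "k \<ge> 1" and pq: "p < 3 * k - 1" "q < 3 * k - 1"
  shows "andrasfai_edge k (cay k p) (cay k q) \<longleftrightarrow> ladj p q"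
proof -
  obtain a r where p: "p = 3 * a + r" "r < 3" by (metis div_mod_decomp mod_less_divisor zero_less_numeral mult.commute)
  obtain b s where q: "q = 3 * b + s" "s < 3" by (metis div_mod_decomp mod_less_divisor zero_less_numeral mult.commute)
  have pd: "p div 3 = a" "p mod 3 = r" "q div 3 = b" "q mod 3 = s" using p q by auto
  have ci: "cay k p < 3 * k - 1" "cay k q < 3 * k - 1" using cay_bound pq by auto
  define i where "i = cay k p"
  define j where "j = cay k q"
  have md: "(int i - int j) mod int (3 * k - 1) = (if int i - int j < 0 then int i - int j + int (3 * k - 1) else int i - int j)"
    using ci unfolding i_def j_def by (intro mod_small) auto
  have e: "andrasfai_edge k i j \<longleftrightarrow> int k \<le> (if int i - int j < 0 then int i - int j + int (3 * k - 1) else int i - int j)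
       \<and> (if int i - int j < 0 then int i - int j + int (3 * k - 1) else int i - int j) \<le> int (2 * k - 1)"
    unfolding andrasfai_edge_def andrasfai_vertices_def Let_def md using ci unfolding i_def j_def by auto
  have "(p+1) mod 3 = (r+1) mod 3" "(q+1) mod 3 = (s+1) mod 3" using pd(2,4) by (metis mod_add_left_eq)+
  then have l: "ladj p q \<longleftrightarrow> (p < q \<and> s = (r + 1) mod 3) \<or> (q < p \<and> r = (s + 1) mod 3)"
    unfolding ladj_def pd(2,4) by simp
  have ii: "i = (if r = 0 then a else if r = 1 then k + a else 2 * k + a)" unfolding i_def cay_def pd by simp
  have jj: "j = (if s = 0 then b else if s = 1 then k + b else 2 * k + b)" unfolding j_def cay_def pd by simp
  have "r = 0 \<or> r = 1 \<or> r = 2" "s = 0 \<or> s = 1 \<or> s = 2" using p q by auto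
  then show ?thesis unfolding i_def[symmetric] j_def[symmetric] e l using ii jj pq p q k
    by (elim disjE; simp; arith)
qed



locale rk = col3 +
  fixes u v :: 'a
  assumes uV: "u \<in> V" and vV: "v \<in> V"
    and umin: "x \<in> V \<Longrightarrow> lt u x \<or> nb u = nb x" and cu: "col u = 0"
    and vmax: "x \<in> V \<Longrightarrow> lt x v \<or> nb x = nb v" and cv: "col v = 1"
begin

definition rank :: "'a \<Rightarrow> nat" where "rank x = card (nb ` {y \<in> V. lt y x})"
definition m :: nat where "m = card (nb ` V)"

lemma rank_lt:
  assumes "x \<in> V" "y \<in> V" "lt x y"
  shows "rank x < rank y"
proof -
  have sub: "nb ` {z \<in> V. lt z x} \<subseteq> nb ` {z \<in> V. lt z y}"
    using lt_trans[of _ x y] assms by blast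
  have "nb x \<in> nb ` {z \<in> V. lt z y}" using assms by blast
  moreover have "nb x \<notin> nb ` {z \<in> V. lt z x}"
  proof
    assume "nb x \<in> nb ` {z \<in> V. lt z x}"
    then obtain z where z: "z \<in> V" "lt z x" "nb z = nb x" by blast
    then have "lt x x" using lt_resp1[OF z(1) assms(1) z(3)] by simp
    then show False using lt_irr by blast
  qed
  ultimately have "nb ` {z \<in> V. lt z x} \<subset> nb ` {z \<in> V. lt z y}" using sub by blast
  moreover have "finite (nb ` {z \<in> V. lt z y})" using fin by simp
  ultimately show ?thesis unfolding rank_def by (rule psubset_card_mono[rotated])
qed

lemma rank_eq:
  assumes "x \<in> V" "y \<in> V" "nb x = nb y"
  shows "rank x = rank y"
proof -
  have "{z \<in> V. lt z x} = {z \<in> V. lt z y}" using lt_resp2[OF assms] by blast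
  then show ?thesis unfolding rank_def by simp
qed

lemma rank_less_iff: "x \<in> V \<Longrightarrow> y \<in> V \<Longrightarrow> rank x < rank y \<longleftrightarrow> lt x y"
  using rank_lt[of x y] rank_lt[of y x] rank_eq[of x y] lt_total[of x y] by fastforce

lemma rank_eq_iff: "x \<in> V \<Longrightarrow> y \<in> V \<Longrightarrow> rank x = rank y \<longleftrightarrow> nb x = nb y"
  using rank_lt[of x y] rank_lt[of y x] rank_eq[of x y] lt_total[of x y] by fastforce

lemma rank_bound:
  assumes "x \<in> V" shows "rank x < m"
proof -
  have "nb ` {z \<in> V. lt z x} \<subseteq> nb ` V - {nb x}"
  proof
    fix S assume "S \<in> nb ` {z \<in> V. lt z x}"
    then obtain z where z: "z \<in> V" "lt z x" "S = nb z" by blast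
    have "nb z \<noteq> nb x"
    proof
      assume "nb z = nb x"
      then have "lt x x" using lt_resp1[OF z(1) assms] z(2) by simp
      then show False using lt_irr by blast
    qed
    then show "S \<in> nb ` V - {nb x}" using z by blast
  qed
  then have "rank x \<le> card (nb ` V - {nb x})" unfolding rank_def by (intro card_mono) (use fin in auto)
  also have "\<dots> < card (nb ` V)" using assms fin by (intro psubset_card_mono) auto
  finally show ?thesis unfolding m_def .
qed

lemma rank_surj: "rank ` V = {0..<m}"
proof -
  define rep where "rep S = (SOME x. x \<in> V \<and> nb x = S)" for S
  have rep: "S \<in> nb ` V \<Longrightarrow> rep S \<in> V \<and> nb (rep S) = S" for S
    unfolding rep_def by (rule someI_ex) blast
  have im: "rank ` V = (\<lambda>S. rank (rep S)) ` (nb ` V)"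
  proof
    show "rank ` V \<subseteq> (\<lambda>S. rank (rep S)) ` (nb ` V)"
    proof
      fix r assume "r \<in> rank ` V"
      then obtain x where x: "x \<in> V" "r = rank x" by blast
      have "rank x = rank (rep (nb x))" using rep[of "nb x"] x(1) rank_eq[of x "rep (nb x)"] by auto
      then show "r \<in> (\<lambda>S. rank (rep S)) ` (nb ` V)" using x by blast
    qed
    show "(\<lambda>S. rank (rep S)) ` (nb ` V) \<subseteq> rank ` V" using rep by blast
  qed
  have inj: "inj_on (\<lambda>S. rank (rep S)) (nb ` V)"
  proof (rule inj_onI)
    fix S T assume "S \<in> nb ` V" "T \<in> nb ` V" "rank (rep S) = rank (rep T)"
    then show "S = T" using rep[of S] rep[of T] rank_eq_iff[of "rep S" "rep T"] by auto
  qed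
  have "card (rank ` V) = m" unfolding im m_def using card_image[OF inj] .
  moreover have "rank ` V \<subseteq> {0..<m}" using rank_bound by auto
  ultimately show ?thesis using card_subset_eq[of "{0..<m}" "rank ` V"] by simp
qed

lemma rank_col: "x \<in> V \<Longrightarrow> rank x mod 3 = col x"
proof (induction "rank x" arbitrary: x)
  case 0
  have "\<not> lt u x" using rank_lt[OF uV 0(2)] 0(1) by fastforce
  then have "nb u = nb x" using umin[OF 0(2)] by simp
  then have "col x = 0" using colN[OF uV 0(2)] cu by simp
  then show ?case using 0(1) by simp
next
  case (Suc n)
  have "n < m" using rank_bound[OF Suc(3)] Suc(2) by simp
  then obtain y where y: "y \<in> V" "rank y = n" using rank_surj by (metis atLeastLessThan_iff imageE zero_le)
  have cy: "n mod 3 = col y" using Suc(1)[of y] y by simp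
  have lyx: "lt y x" using rank_less_iff[OF y(1) Suc(3)] y(2) Suc(2) by simp
  have "col x = nx (col y)"
  proof (rule ccontr)
    assume "col x \<noteq> nx (col y)"
    then obtain w where w: "w \<in> V" "lt y w" "lt w x" using K3[OF y(1) Suc(3) lyx] by blast
    have "n < rank w" "rank w < Suc n" using rank_lt[OF y(1) w(1) w(2)] rank_lt[OF w(1) Suc(3) w(3)] y(2) Suc(2) by auto
    then show False by simp
  qed
  then have "col x = (n mod 3 + 1) mod 3" using cy unfolding nx_def by simp
  then have "col x = (n + 1) mod 3" by (metis mod_add_left_eq)
  then show ?case using Suc(2) by simp
qed

lemma rank_v: "rank v = m - 1"
proof -
  have le: "rank x \<le> rank v" if "x \<in> V" for x
    using vmax[OF that] rank_lt[OF that vV] rank_eq[OF that vV] by fastforce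
  have "m > 0" using rank_bound[OF vV] by simp
  then have "m - 1 \<in> rank ` V" using rank_surj by simp
  then obtain x where "x \<in> V" "rank x = m - 1" by (metis imageE)
  then have "m - 1 \<le> rank v" using le by metis
  moreover have "rank v < m" using rank_bound[OF vV] .
  ultimately show ?thesis by simp
qed

lemma m_mod: "m mod 3 = 2" "m \<ge> 2"
proof -
  have "(m - 1) mod 3 = 1" using rank_col[OF vV] rank_v cv by simp
  moreover have "m > 0" using rank_bound[OF vV] by simp
  ultimately obtain n where n: "m = Suc n" "n mod 3 = 1" by (metis Suc_pred')
  then show "m mod 3 = 2" by (simp add: mod_Suc)
  have "n \<noteq> 0" using n(2) by (metis mod_0 zero_neq_one)
  then show "m \<ge> 2" using n(1) by simp
qed

lemma rank_edge:
  assumes "x \<in> V" "y \<in> V"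
  shows "E x y \<longleftrightarrow> ladj (rank x) (rank y)"
proof (rule ccases[of y x])
  assume b: "col y = col x"
  then have "\<not> E x y" using proper by metis
  moreover have "rank x mod 3 = rank y mod 3" using rank_col assms b by simp
  ultimately show ?thesis using L0 by blast
next
  assume b: "col y = nx (col x)"
  have "rank y mod 3 = (rank x mod 3 + 1) mod 3" using rank_col assms b unfolding nx_def by simp
  then have "rank y mod 3 = (rank x + 1) mod 3" by (metis mod_add_left_eq)
  then have "rank y mod 3 = sc (rank x mod 3)" by (metis sc_mod)
  then have "ladj (rank x) (rank y) \<longleftrightarrow> rank x < rank y" by (rule L1)
  also have "\<dots> \<longleftrightarrow> lt x y" by (rule rank_less_iff[OF assms])
  also have "\<dots> \<longleftrightarrow> E x y" by (rule lt_nx[OF b])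
  finally show ?thesis by simp
next
  assume b: "col y = pv (col x)"
  then have b': "col x = nx (col y)" using cf(7)[of x] by simp
  have "rank x mod 3 = (rank y mod 3 + 1) mod 3" using rank_col assms b' unfolding nx_def by simp
  then have "rank x mod 3 = (rank y + 1) mod 3" by (metis mod_add_left_eq)
  then have "rank x mod 3 = sc (rank y mod 3)" by (metis sc_mod)
  then have "ladj (rank y) (rank x) \<longleftrightarrow> rank y < rank x" by (rule L1)
  also have "\<dots> \<longleftrightarrow> lt y x" by (rule rank_less_iff[OF assms(2,1)])
  also have "\<dots> \<longleftrightarrow> E y x" by (rule lt_nx[OF b'])
  finally show ?thesis using ladj_sym sym by metis
qed

end


lemma less6: "i < (6::nat) \<Longrightarrow> i = 0 \<or> i = 1 \<or> i = 2 \<or> i = 3 \<or> i = 4 \<or> i = 5" by auto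
lemma rot: "i < 6 \<Longrightarrow> j < 6 \<Longrightarrow> s < (6::nat) \<Longrightarrow> ((j + s) mod 6 = ((i + s) mod 6 + 1) mod 6) \<longleftrightarrow> (j = (i + 1) mod 6)"
  by (drule less6, drule less6, drule less6, (elim disjE; simp))

lemma noC6_lin:
  fixes p :: "nat \<Rightarrow> nat"
  assumes h: "\<forall>i<6. \<forall>j<6. ladj (p i) (p j) \<longleftrightarrow> (j = (i + 1) mod 6 \<or> i = (j + 1) mod 6)"
  shows False
proof -
  have "(0::nat) \<in> {..<6}" by simp
  then have "finite (p ` {..<6})" "p ` {..<6} \<noteq> {}" by blast+
  then have "Max (p ` {..<6}) \<in> p ` {..<6}" by (rule Max_in)
  then obtain s where s: "s < 6" "p s = Max (p ` {..<6})" by auto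
  have smax: "i < 6 \<Longrightarrow> p i \<le> p s" for i using s(2) by simp
  define q where "q i = p ((i + s) mod 6)" for i
  have hq: "ladj (q i) (q j) \<longleftrightarrow> (j = (i + 1) mod 6 \<or> i = (j + 1) mod 6)" if "i < 6" "j < 6" for i j
  proof -
    have "ladj (q i) (q j) \<longleftrightarrow> ((j + s) mod 6 = ((i + s) mod 6 + 1) mod 6 \<or> (i + s) mod 6 = ((j + s) mod 6 + 1) mod 6)"
      unfolding q_def using h by simp
    then show ?thesis using rot[of i j s] rot[of j i s] that s(1) by simp
  qed
  have qle: "q i \<le> q 0" if "i < 6" for i unfolding q_def using smax s(1) by simp
  show False
    apply (rule noC6_max[of "q 1" "q 0" "q 2" "q 3" "q 4" "q 5"])
    using qle hq by simp_all
qed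

lemma easy_dir:
  fixes V :: "'a set" and E :: "'a \<Rightarrow> 'a \<Rightarrow> bool" and f :: "'a \<Rightarrow> nat"
  assumes k: "k \<ge> 1" and f: "f ` V = andrasfai_vertices k"
    and e: "\<forall>x\<in>V. \<forall>y\<in>V. E x y \<longleftrightarrow> andrasfai_edge k (f x) (f y)"
    and c6: "has_induced_C6 V E"
  shows False
proof -
  from c6 obtain c :: "nat \<Rightarrow> 'a" where c: "c ` {0..<6} \<subseteq> V"
    "\<forall>i<6. \<forall>j<6. E (c i) (c j) \<longleftrightarrow> (j = (i + 1) mod 6 \<or> i = (j + 1) mod 6)"
    unfolding has_induced_C6_def by auto
  define p where "p i = lin k (f (c i))" for i
  have cV: "i < 6 \<Longrightarrow> c i \<in> V" for i using c(1) by auto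
  have fb: "i < 6 \<Longrightarrow> f (c i) < 3 * k - 1" for i using cV f unfolding andrasfai_vertices_def by auto
  have "ladj (p i) (p j) \<longleftrightarrow> (j = (i + 1) mod 6 \<or> i = (j + 1) mod 6)" if "i < 6" "j < 6" for i j
  proof -
    have "ladj (p i) (p j) \<longleftrightarrow> andrasfai_edge k (cay k (p i)) (cay k (p j))"
      unfolding p_def using edge_cay[OF k lin_bound lin_bound] fb that by simp
    also have "\<dots> \<longleftrightarrow> andrasfai_edge k (f (c i)) (f (c j))" unfolding p_def using cay_lin fb that by simp
    also have "\<dots> \<longleftrightarrow> E (c i) (c j)" using e cV that by simp
    also have "\<dots> \<longleftrightarrow> (j = (i + 1) mod 6 \<or> i = (j + 1) mod 6)" using c(2) that by simp
    finally show ?thesis .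
  qed
  then show False using noC6_lin[of p] by blast
qed


lemma hard_dir:
  fixes V :: "'a set" and E :: "'a \<Rightarrow> 'a \<Rightarrow> bool"
  assumes sg: "simple_graph V E" and mt: "maximal_triangle_free V E" and c2: "card V \<ge> 2"
    and nc: "\<not> has_induced_C6 V E"
  shows "\<exists>k\<ge>1. is_blowup_of V E (andrasfai_vertices k) (andrasfai_edge k)"
proof -
  interpret mtfg V E by (rule mtfg.intro[OF sg mt nc])
  have finnb: "finite (nb x)" for x
  proof -
    have "nb x \<subseteq> V" unfolding nb_def using inV by blast
    then show ?thesis using fin finite_subset by blast
  qed
  obtain u v where uv: "E u v" and ind: "\<And>a b. E a b \<Longrightarrow> E u a \<or> E v a \<or> E u b \<or> E v b"
  proof (cases "\<exists>a\<in>V. \<exists>w\<in>V. a \<noteq> w \<and> \<not> E a w")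
    case True
    then obtain a0 w0 where P0: "a0 \<in> V" "w0 \<in> V" "a0 \<noteq> w0" "\<not> E a0 w0" by blast
    define P where "P pr = (fst pr \<in> V \<and> snd pr \<in> V \<and> fst pr \<noteq> snd pr \<and> \<not> E (fst pr) (snd pr))" for pr
    define mu where "mu pr = card (nb (fst pr) \<inter> nb (snd pr))" for pr
    have "P (a0, w0)" using P0 unfolding P_def by simp
    then obtain pr where pr: "P pr" "\<And>pr'. P pr' \<Longrightarrow> mu pr \<le> mu pr'"
      using ex_has_least_nat[of P "(a0,w0)" mu] by blast
    define u where "u = fst pr"
    define w where "w = snd pr"
    have uw: "u \<in> V" "w \<in> V" "u \<noteq> w" "\<not> E u w" using pr(1) unfolding P_def u_def w_def by auto
    have mn: "card (nb u \<inter> nb w) \<le> card (nb x \<inter> nb y)" if "x \<in> V" "y \<in> V" "x \<noteq> y" "\<not> E x y" for x y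
    proof -
      have "P (x, y)" using that unfolding P_def by simp
      then show ?thesis using pr(2)[of "(x, y)"] unfolding mu_def u_def w_def by simp
    qed
    obtain v where v: "E u v" "E w v" using cn[OF uw] by blast
    have key: "E w a" if a: "a \<in> V" "\<not> E u a" "\<not> E v a" for a
    proof (rule ccontr)
      assume nwa: "\<not> E w a"
      have au: "a \<noteq> u" using a(3) v(1) sym by blast
      have wa: "w \<noteq> a" using a(3) v(2) sym by blast
      have va: "\<not> E a v" using a(3) sym by blast
      have "(\<forall>b3. E u b3 \<and> E a b3 \<longrightarrow> E w b3) \<or> (\<forall>b2. E w b2 \<and> E a b2 \<longrightarrow> E u b2)"
      proof (rule ccontr)
        assume "\<not> ?thesis"
        then obtain b2 b3 where "E u b3" "E a b3" "\<not> E w b3" "E w b2" "E a b2" "\<not> E u b2" by blast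
        then show False using helly[of u v w a b2 b3] v va by blast
      qed
      then show False
      proof
        assume h: "\<forall>b3. E u b3 \<and> E a b3 \<longrightarrow> E w b3"
        have "nb u \<inter> nb a \<subseteq> nb u \<inter> nb w" using h unfolding nb_def by blast
        moreover have "v \<in> nb u \<inter> nb w" "v \<notin> nb u \<inter> nb a" using v va unfolding nb_def by auto
        ultimately have "nb u \<inter> nb a \<subset> nb u \<inter> nb w" by blast
        then have "card (nb u \<inter> nb a) < card (nb u \<inter> nb w)" using finnb by (intro psubset_card_mono) auto
        moreover have "card (nb u \<inter> nb w) \<le> card (nb u \<inter> nb a)" using mn[OF uw(1) a(1) au[symmetric] a(2)] .
        ultimately show False by simp
      next
        assume h: "\<forall>b2. E w b2 \<and> E a b2 \<longrightarrow> E u b2"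
        have "nb w \<inter> nb a \<subseteq> nb u \<inter> nb w" using h unfolding nb_def by blast
        moreover have "v \<in> nb u \<inter> nb w" "v \<notin> nb w \<inter> nb a" using v va unfolding nb_def by auto
        ultimately have "nb w \<inter> nb a \<subset> nb u \<inter> nb w" by blast
        then have "card (nb w \<inter> nb a) < card (nb u \<inter> nb w)" using finnb by (intro psubset_card_mono) auto
        moreover have "card (nb u \<inter> nb w) \<le> card (nb w \<inter> nb a)" using mn[OF uw(2) a(1) wa nwa] .
        ultimately show False by simp
      qed
    qed
    have "E u a \<or> E v a \<or> E u b \<or> E v b" if ab: "E a b" for a b
    proof (rule ccontr)
      assume "\<not> ?thesis"
      then have "E w a" "E w b" using key inV ab by blast+
      then show False using tf ab by blast
    qed
    then show ?thesis using that[OF v(1)] by blast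
  next
    case False
    have "V \<noteq> {}" using c2 by auto
    then obtain u where u: "u \<in> V" by blast
    have "card (V - {u}) \<ge> 1" using c2 u fin by simp
    then have "0 < card (V - {u})" by simp
    then have "V - {u} \<noteq> {}" using card_gt_0_iff by blast
    then obtain v where v: "v \<in> V" "v \<noteq> u" by blast
    have all: "a \<in> V \<Longrightarrow> b \<in> V \<Longrightarrow> a \<noteq> b \<Longrightarrow> E a b" for a b using False by blast
    have euv: "E u v" using all u v by blast
    have "E u a \<or> E v a \<or> E u b \<or> E v b" if ab: "E a b" for a b
    proof (cases "a = u")
      case True
      then show ?thesis using euv sym by blast
    next
      case False
      then show ?thesis using all[of u a] u inV(1)[OF ab] by blast
    qed
    then show ?thesis using that[OF euv] by blast
  qed
  define col where "col x = (if E v x then 0 else if E u x then 1 else (2::nat))" for x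
  have uV: "u \<in> V" and vV: "v \<in> V" using uv inV by auto
  interpret C: col3 V E col
  proof unfold_locales
    show "col x < 3" for x unfolding col_def by auto
    show "col x \<noteq> col y" if e: "E x y" for x y
    proof
      assume ce: "col x = col y"
      show False
      proof (cases "E v x")
        case True
        then have "E v y" using ce unfolding col_def by (auto split: if_splits)
        then show False using tf[OF True e] by blast
      next
        case F1: False
        show False
        proof (cases "E u x")
          case True
          then have "E u y" using ce F1 unfolding col_def by (auto split: if_splits)
          then show False using tf[OF True e] by blast
        next
          case False
          then have "\<not> E u y \<and> \<not> E v y" using ce F1 unfolding col_def by (auto split: if_splits)
          then show False using ind[OF e] F1 False by blast
        qed
      qed
    qed
    show "col x = col y" if "x \<in> V" "y \<in> V" "nb x = nb y" for x y
    proof -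
      have "v \<in> nb x \<longleftrightarrow> v \<in> nb y" "u \<in> nb x \<longleftrightarrow> u \<in> nb y" using that(3) by simp_all
      then have "E v x \<longleftrightarrow> E v y" "E u x \<longleftrightarrow> E u y" unfolding nb_def using sym by blast+
      then show ?thesis unfolding col_def by simp
    qed
  qed
  have cu: "col u = 0" using uv sym unfolding col_def by auto
  have cv: "col v = 1" using uv irr unfolding col_def by auto
  have umin: "C.lt u x \<or> nb u = nb x" if x: "x \<in> V" for x
  proof (cases "E v x")
    case True
    then have cx: "col x = col u" using cu unfolding col_def by simp
    have du: "C.dn u = {}"
    proof -
      have "y \<notin> C.dn u" for y
      proof
        assume "y \<in> C.dn u"
        then have "E u y" "col y = 2" using C.dn_iff cu unfolding pv_def by auto
        then show False unfolding col_def by (auto split: if_splits)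
      qed
      then show ?thesis by blast
    qed
    show ?thesis
    proof (cases "C.dn x = {}")
      case True
      then have "nb u = nb x" using C.dn_eq[OF uV x cx[symmetric]] du by simp
      then show ?thesis by simp
    next
      case False
      then have "C.dn u \<subset> C.dn x" using du by blast
      then show ?thesis using C.lt_same[of u x] cx by simp
    qed
  next
    case F: False
    show ?thesis
    proof (cases "E u x")
      case True
      then have "col x = nx (col u)" using F cu unfolding col_def nx_def by simp
      then show ?thesis using C.lt_nx[of x u] True by simp
    next
      case False
      then have "col x = pv (col u)" using F cu unfolding col_def pv_def by simp
      then show ?thesis using C.lt_pv[of x u] False by simp
    qed
  qed
  have vmax: "C.lt x v \<or> nb x = nb v" if x: "x \<in> V" for x
  proof (cases "E v x")
    case True
    then have "col v = nx (col x)" using cv unfolding col_def nx_def by simp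
    then show ?thesis using C.lt_nx[of v x] True sym by blast
  next
    case F: False
    show ?thesis
    proof (cases "E u x")
      case True
      then have cx: "col x = col v" using F cv unfolding col_def by simp
      have "C.dn x \<subseteq> C.dn v"
      proof
        fix y assume "y \<in> C.dn x"
        then have "E x y" "col y = 0" using C.dn_iff cx cv unfolding pv_def by auto
        then have "E v y" unfolding col_def by (auto split: if_splits)
        then show "y \<in> C.dn v" using C.dn_iff cv \<open>col y = 0\<close> unfolding pv_def by auto
      qed
      then have "C.dn x \<subset> C.dn v \<or> C.dn x = C.dn v" by blast
      then show ?thesis using C.lt_same[of x v] cx C.dn_eq[OF x vV cx] by blast
    next
      case False
      then have "col v = pv (col x)" using F cv unfolding col_def pv_def by simp
      then show ?thesis using C.lt_pv[of v x] False F sym by blast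
    qed
  qed
  interpret R: rk V E col u v
    by unfold_locales (use uV vV umin cu vmax cv in auto)
  define k where "k = (R.m + 1) div 3"
  have mk: "R.m = 3 * k - 1" "k \<ge> 1" using R.m_mod unfolding k_def by presburger+
  define f where "f x = cay k (R.rank x)" for x
  have cayim: "cay k ` {0..<3 * k - 1} = {0..<3 * k - 1}"
  proof
    show "cay k ` {0..<3 * k - 1} \<subseteq> {0..<3 * k - 1}" using cay_bound by auto
    show "{0..<3 * k - 1} \<subseteq> cay k ` {0..<3 * k - 1}"
    proof
      fix i assume i: "i \<in> {0..<3 * k - 1}"
      then have "i = cay k (lin k i)" using cay_lin by simp
      moreover have "lin k i \<in> {0..<3 * k - 1}" using lin_bound i by simp
      ultimately show "i \<in> cay k ` {0..<3 * k - 1}" by blast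
    qed
  qed
  have "f ` V = andrasfai_vertices k"
  proof -
    have "f ` V = cay k ` (R.rank ` V)" unfolding f_def by auto
    also have "\<dots> = cay k ` {0..<3 * k - 1}" using R.rank_surj mk by simp
    finally show ?thesis using cayim unfolding andrasfai_vertices_def by simp
  qed
  moreover have "E x y \<longleftrightarrow> andrasfai_edge k (f x) (f y)" if "x \<in> V" "y \<in> V" for x y
  proof -
    have "R.rank x < 3 * k - 1" "R.rank y < 3 * k - 1" using R.rank_bound that mk by auto
    then have "andrasfai_edge k (f x) (f y) \<longleftrightarrow> ladj (R.rank x) (R.rank y)"
      unfolding f_def using edge_cay mk(2) by blast
    then show ?thesis using R.rank_edge[OF that] by simp
  qed
  ultimately show ?thesis unfolding is_blowup_of_def using mk(2) by blast
qed

theorem proposition3p5: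
  fixes V :: "'a set" and E :: "'a \<Rightarrow> 'a \<Rightarrow> bool"
  assumes "simple_graph V E"
    and "maximal_triangle_free V E"
    and "card V \<ge> 2"
  shows "\<not> has_induced_C6 V E \<longleftrightarrow>
         (\<exists>k\<ge>1. is_blowup_of V E (andrasfai_vertices k) (andrasfai_edge k))"
proof
  assume "\<not> has_induced_C6 V E"
  then show "\<exists>k\<ge>1. is_blowup_of V E (andrasfai_vertices k) (andrasfai_edge k)"
    using hard_dir assms by blast
next
  assume "\<exists>k\<ge>1. is_blowup_of V E (andrasfai_vertices k) (andrasfai_edge k)"
  then obtain k f where k: "k \<ge> 1" and f: "f ` V = andrasfai_vertices k"
    and e: "\<forall>x\<in>V. \<forall>y\<in>V. E x y \<longleftrightarrow> andrasfai_edge k (f x) (f y)"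
    unfolding is_blowup_of_def by blast
  show "\<not> has_induced_C6 V E"
    using easy_dir[OF k f e] by blast
qed

end
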